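(* Let $X$ be a compact metric space and $f\colon X\to X$ continuous. Then $\mathrm{Per}(f)\cup\{1\}\subseteq\mathrm{Per}(2^f)$, and $\mathrm{Per}(2^f)$ is closed under taking prime power divisors: if $n\in\mathrm{Per}(2^f)$, $p$ is prime and $p^a\mid n$ with $a\ge 1$, then $p^a\in\mathrm{Per}(2^f)$.
   Context: $2^X$ is the space of nonempty closed subsets of $X$ with the Hausdorff metric, and $2^f(C)=f(C)$. For a map $g$, $\mathrm{Per}(g)$ is the set of fundamental (least) periods of periodic points of $g$. *)

theory Defs
  imports "HOL-Analysis.Analysis" "HOL-Computational_Algebra.Primes"
begin

definition least_period :: "('a \<Rightarrow> 'a) \<Rightarrow> 'a \<Rightarrow> nat \<Rightarrow> bool" where
  "least_period g x n \<longleftrightarrow> n \<ge> 1 \<and> (g ^^ n) x = x \<and> (\<forall>m. 0 < m \<and> m < n \<longrightarrow> (g ^^ m) x \<noteq> x)"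

definition Per :: "'a set \<Rightarrow> ('a \<Rightarrow> 'a) \<Rightarrow> nat set" where
  "Per S g = {n. \<exists>x\<in>S. least_period g x n}"

definition hyperspace :: "'a::topological_space set \<Rightarrow> 'a set set" where
  "hyperspace X = {C. C \<subseteq> X \<and> C \<noteq> {} \<and> closed C}"

definition induced_map :: "('a \<Rightarrow> 'a) \<Rightarrow> 'a set \<Rightarrow> 'a set" where
  "induced_map f C = f ` C"

end

theory Submission
  imports Defs
begin

lemma iter_induced: "(induced_map f ^^ m) A = (f ^^ m) ` A"
  by (induction m) (auto simp: induced_map_def image_comp)

lemma funpow_cont:
  assumes "continuous_on X f" "f ` X \<subseteq> X"
  shows "continuous_on X (f^^m) \<and> (f^^m) ` X \<subseteq> X"
proof (induction m)
  case 0
  then show ?case by (simp add: continuous_on_id)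
next
  case (Suc m)
  then have c: "continuous_on X (f^^m)" and s: "(f^^m) ` X \<subseteq> X" by auto
  have "continuous_on X (f \<circ> f^^m)"
    by (rule continuous_on_compose[OF c]) (rule continuous_on_subset[OF assms(1) s])
  moreover have "(f \<circ> f^^m) ` X \<subseteq> X" using s assms(2) by (auto simp: image_comp[symmetric])
  ultimately show ?case by simp
qed

lemma nest_nonempty:
  fixes F :: "nat \<Rightarrow> 'a::t2_space set"
  assumes c: "\<And>n. compact (F n)" and ne: "\<And>n. F n \<noteq> {}"
    and mono: "\<And>m n. m \<le> n \<Longrightarrow> F n \<subseteq> F m"
  shows "(\<Inter>n. F n) \<noteq> {}"
proof -
  have "F 0 \<inter> (\<Inter>i\<in>UNIV. F i) \<noteq> {}"
  proof (rule compact_imp_fip_image[OF c])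
    show "closed (F i)" for i using c compact_imp_closed by blast
    fix I' :: "nat set" assume fin: "finite I'" and "I' \<subseteq> UNIV"
    define N where "N = (if I' = {} then 0 else Max I')"
    have "F N \<subseteq> F i" if "i \<in> I'" for i
    proof -
      have "i \<le> N" using Max_ge[OF fin that] that by (auto simp: N_def)
      then show ?thesis by (rule mono)
    qed
    then have "F N \<subseteq> F 0 \<inter> (\<Inter>i\<in>I'. F i)"
      using mono[of 0 N] by auto
    then show "F 0 \<inter> (\<Inter>i\<in>I'. F i) \<noteq> {}" using ne[of N] by blast
  qed
  then show ?thesis by blast
qed

lemma core:
  fixes g :: "'a::metric_space \<Rightarrow> 'a"
  assumes K: "compact K" and gc: "continuous_on K g" and gK: "g ` K \<subseteq> K"
    and AK: "A \<subseteq> K" and cA: "compact A" and gA: "g ` A \<subseteq> A"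
  shows "compact (\<Inter>k. (g^^k) ` A)" "g ` (\<Inter>k. (g^^k) ` A) = (\<Inter>k. (g^^k) ` A)"
    "A \<noteq> {} \<Longrightarrow> (\<Inter>k. (g^^k) ` A) \<noteq> {}" "(\<Inter>k. (g^^k) ` A) \<subseteq> A"
proof -
  define P where "P = (\<Inter>k. (g^^k) ` A)"
  have it: "continuous_on K (g^^k) \<and> (g^^k) ` K \<subseteq> K" for k using funpow_cont[OF gc gK] .
  have cpt: "compact ((g^^k) ` A)" for k
    using compact_continuous_image[OF continuous_on_subset[OF conjunct1[OF it] AK] cA] .
  have dec1: "(g^^Suc k) ` A \<subseteq> (g^^k) ` A" for k
  proof -
    have "(g^^Suc k) ` A = (g^^k) ` (g ` A)" by (simp only: funpow_Suc_right image_comp)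
    then show ?thesis using gA by (metis image_mono)
  qed
  have dec: "m \<le> n \<Longrightarrow> (g^^n) ` A \<subseteq> (g^^m) ` A" for m n
    using lift_Suc_antimono_le[of "\<lambda>k. (g^^k) ` A", OF dec1] by blast
  have PA: "P \<subseteq> A" unfolding P_def using INT_lower[of 0 UNIV "\<lambda>k. (g^^k) ` A"] by simp
  show "P \<subseteq> A" using PA by (simp add: P_def)
  have clP: "closed P" unfolding P_def using cpt compact_imp_closed by blast
  have "compact (A \<inter> P)" using compact_Int_closed[OF cA clP] .
  moreover have "A \<inter> P = P" using PA by blast
  ultimately show "compact (\<Inter>k. (g^^k) ` A)" by (simp add: P_def)
  show "A \<noteq> {} \<Longrightarrow> (\<Inter>k. (g^^k) ` A) \<noteq> {}"
    by (rule nest_nonempty[OF cpt]) (use dec in auto)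
  have "g ` P \<subseteq> P"
  proof
    fix v assume "v \<in> g ` P"
    then obtain w where w: "w \<in> P" "v = g w" by auto
    show "v \<in> P" unfolding P_def
    proof
      fix k
      have "w \<in> (g^^k) ` A" using w unfolding P_def by blast
      then obtain x where x: "x \<in> A" "w = (g^^k) x" by blast
      then have "g w = (g^^Suc k) x" by simp
      then have "g w \<in> (g^^Suc k) ` A" using x(1) by blast
      then show "v \<in> (g^^k) ` A" using dec1 w by blast
    qed
  qed
  moreover have "P \<subseteq> g ` P"
  proof
    fix w assume wP: "w \<in> P"
    define Q where "Q k = (g^^k) ` A \<inter> {u \<in> K. g u = w}" for k
    have closK: "closed K" using K compact_imp_closed by blast
    have cQ: "compact (Q k)" for k unfolding Q_def
      by (rule compact_Int_closed[OF cpt continuous_closed_preimage_constant[OF gc closK]])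
    have neQ: "Q k \<noteq> {}" for k
    proof -
      have "w \<in> (g^^Suc k) ` A" using wP unfolding P_def by blast
      then obtain x where x: "x \<in> A" "w = (g^^Suc k) x" by blast
      define u where "u = (g^^k) x"
      have u: "u \<in> (g^^k) ` A" "g u = w" using x by (auto simp: u_def)
      have "(g^^k) ` A \<subseteq> K" using it AK by blast
      then show ?thesis using u unfolding Q_def by blast
    qed
    have "(\<Inter>k. Q k) \<noteq> {}"
    proof (rule nest_nonempty[OF cQ neQ])
      fix m n :: nat assume "m \<le> n"
      then show "Q n \<subseteq> Q m" using dec[of m n] unfolding Q_def by blast
    qed
    then obtain u where "\<forall>k. u \<in> Q k" by blast
    then have "u \<in> P" "g u = w" unfolding Q_def P_def by auto
    then show "w \<in> g ` P" by blast
  qed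
  ultimately show "g ` (\<Inter>k. (g^^k) ` A) = (\<Inter>k. (g^^k) ` A)" by (simp add: P_def)
qed


lemma gcd_part:
  fixes e p a r :: nat
  assumes p: "prime p" and a: "a \<ge> 1" and nd: "\<not> p^a dvd e"
  shows "gcd e (p^a * r) dvd p^(a-1) * r"
proof -
  have "gcd e (p^a * r) dvd gcd e (p^a) * r"
  proof -
    have "gcd e (p^a) * r = gcd (e*r) (p^a*r)"
      by (metis gcd_mult_distrib_nat mult.commute)
    moreover have "gcd e (p^a * r) dvd e * r" by (rule dvd_mult2) (rule gcd_dvd1)
    moreover have "gcd e (p^a * r) dvd p^a * r" by (rule gcd_dvd2)
    ultimately show ?thesis using gcd_greatest by metis
  qed
  moreover have "gcd e (p^a) dvd p^(a-1)"
  proof -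
    have "gcd e (p^a) dvd p^a" by simp
    then obtain i where i: "i \<le> a" "gcd e (p^a) = p^i" using divides_primepow_nat[OF p] by blast
    have "i \<noteq> a" using i nd by (metis gcd_dvd1)
    then have "i \<le> a - 1" using i by simp
    then show ?thesis using i le_imp_power_dvd by metis
  qed
  ultimately show ?thesis by (meson dvd_trans mult_dvd_mono dvd_refl)
qed

lemma part2:
  fixes X :: "'a::metric_space set" and f :: "'a \<Rightarrow> 'a"
  assumes X: "compact X" and fc: "continuous_on X f" and fX: "f ` X \<subseteq> X"
    and Ch: "C \<in> hyperspace X" and lp: "least_period (induced_map f) C n"
    and p: "prime p" and a: "a \<ge> 1" and dv: "p^a dvd n"
  shows "p^a \<in> Per (hyperspace X) (induced_map f)"
proof -
  define Cj where "Cj j = (f^^j) ` C" for j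
  have it: "continuous_on X (f^^k) \<and> (f^^k) ` X \<subseteq> X" for k using funpow_cont[OF fc fX] .
  have n1: "n \<ge> 1" and Cn: "Cj n = C" and Cne: "\<And>m. 0 < m \<Longrightarrow> m < n \<Longrightarrow> Cj m \<noteq> C"
    using lp by (auto simp: least_period_def iter_induced Cj_def)
  have CX: "C \<subseteq> X" and clC: "closed C" and Cnem: "C \<noteq> {}" using Ch by (auto simp: hyperspace_def)
  have cC: "compact C" using compact_Int_closed[OF X clC] CX by (simp add: Int_absorb1)
  have C0: "Cj 0 = C" by (simp add: Cj_def)
  have shift: "(f^^m) ` (Cj j) = Cj (m + j)" for m j
    by (simp add: Cj_def funpow_add image_comp)
  have per: "Cj (k*n + j) = Cj j" for k j
  proof (induction k)
    case (Suc k)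
    have "Cj (Suc k * n + j) = (f^^(k*n + j)) ` (Cj n)"
      by (simp add: shift algebra_simps)
    also have "\<dots> = Cj (k*n + j)" using Cn by (simp add: Cj_def)
    finally show ?case using Suc by simp
  qed simp
  have permod: "Cj j = Cj (j mod n)" for j
    using per[of "j div n" "j mod n"] by simp
  have CjX: "Cj j \<subseteq> X" for j using it CX unfolding Cj_def by blast
  have cCj: "compact (Cj j)" for j
    unfolding Cj_def using compact_continuous_image[OF continuous_on_subset[OF conjunct1[OF it] CX] cC] .
  define d where "d = n div p"
  have p2: "p \<ge> 2" using p prime_ge_2_nat by blast
  have ppa: "p dvd p^a"
  proof -
    obtain b where "a = Suc b" using a by (cases a) auto
    then show ?thesis by simp
  qed
  have pn: "p dvd n" using dvd_trans[OF ppa dv] .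
  have nd: "n = p * d" unfolding d_def using dvd_mult_div_cancel[OF pn] by simp
  have d0: "0 < d"
  proof (rule ccontr)
    assume "\<not> 0 < d"
    then have "d = 0" by simp
    then show False using nd n1 by simp
  qed
  have dn: "d < n" proof -
    have "d < p * d" using n_less_m_mult_n[OF d0, of p] p2 by simp
    then show ?thesis using nd by simp
  qed
  have notsub: "\<not> C \<subseteq> Cj d"
  proof
    assume sub: "C \<subseteq> Cj d"
    have step: "Cj (i*d) \<subseteq> Cj (i*d + d)" for i
    proof -
      have "(f^^(i*d)) ` C \<subseteq> (f^^(i*d)) ` Cj d" using sub by (rule image_mono)
      then show ?thesis unfolding shift[of "i*d" d] Cj_def[of "i*d"] .
    qed
    have "Cj d \<subseteq> Cj (Suc i * d)" for i
    proof (induction i)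
      case (Suc i)
      then show ?case using step[of "Suc i"] by (simp add: algebra_simps)
    qed simp
    from this[of "p - 1"] have "Cj d \<subseteq> C" using p2 nd Cn
      by (simp add: mult.commute)
    then have "Cj d = C" using sub by blast
    then show False using Cne d0 dn by blast
  qed
  define TT where "TT z = {j. j < n \<and> z \<in> Cj j}" for z
  obtain x0 where "x0 \<in> C" "x0 \<notin> Cj d" using notsub by blast
  then obtain y where y: "y \<in> C \<and> y \<notin> Cj d"
    and ymin: "\<forall>z. z \<in> C \<and> z \<notin> Cj d \<longrightarrow> card (TT y) \<le> card (TT z)"
    using ex_has_least_nat[of "\<lambda>z. z \<in> C \<and> z \<notin> Cj d" x0 "\<lambda>z. card (TT z)"] by blast
  have bk: "\<exists>z. z \<in> C \<and> z \<notin> Cj d \<and> (f^^(k*n)) z = y \<and> (\<forall>j. z \<in> Cj j \<longleftrightarrow> y \<in> Cj j)" for k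
  proof (induction k)
    case 0
    then show ?case using y by auto
  next
    case (Suc k)
    then obtain z where z: "z \<in> C" "z \<notin> Cj d" "(f^^(k*n)) z = y" "\<forall>j. z \<in> Cj j \<longleftrightarrow> y \<in> Cj j" by blast
    have "z \<in> (f^^n) ` C" using z(1) Cn by (simp add: Cj_def)
    then obtain w where w: "w \<in> C" "(f^^n) w = z" by blast
    have wz: "w \<in> Cj j \<Longrightarrow> z \<in> Cj j" for j
    proof -
      assume "w \<in> Cj j"
      then have "z \<in> (f^^n) ` Cj j" using w by blast
      then show "z \<in> Cj j" using shift[of n j] per[of 1 j] by simp
    qed
    have wd: "w \<notin> Cj d" using wz z by blast
    have fin: "finite (TT y)" unfolding TT_def by simp
    have sub: "TT w \<subseteq> TT y" using wz z(4) unfolding TT_def by blast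
    have "card (TT y) \<le> card (TT w)" using ymin w(1) wd by blast
    then have eq: "TT w = TT y"
      by (intro card_subset_eq[OF fin sub]) (use card_mono[OF fin sub] in linarith)
    have "w \<in> Cj j \<longleftrightarrow> y \<in> Cj j" for j
    proof -
      have "j mod n < n" using n1 by simp
      then have "w \<in> Cj (j mod n) \<longleftrightarrow> y \<in> Cj (j mod n)" using eq unfolding TT_def by blast
      then show ?thesis using permod[of j] by simp
    qed
    moreover have "(f^^(Suc k * n)) w = y"
    proof -
      have "(f^^(Suc k * n)) w = (f^^(k*n)) ((f^^n) w)"
      proof -
        have "Suc k * n = k * n + n" by simp
        then have "f^^(Suc k * n) = f^^(k*n) \<circ> f^^n" by (simp only: funpow_add)
        then show ?thesis by simp
      qed
      then show ?thesis using w z by simp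
    qed
    ultimately show ?case using w(1) wd by blast
  qed
  define g where "g = f^^n"
  define A where "A = {z \<in> X. \<forall>j. y \<in> Cj j \<longrightarrow> z \<in> Cj j}"
  have AK: "A \<subseteq> X" unfolding A_def by blast
  have cA: "compact A"
  proof -
    have "A = X \<inter> (\<Inter>j\<in>{j. y \<in> Cj j}. Cj j)" unfolding A_def by blast
    moreover have "closed (\<Inter>j\<in>{j. y \<in> Cj j}. Cj j)" using cCj compact_imp_closed by blast
    ultimately show ?thesis using compact_Int_closed[OF X] by simp
  qed
  have gA: "g ` A \<subseteq> A"
  proof
    fix v assume "v \<in> g ` A"
    then obtain z where z: "z \<in> A" "v = g z" by blast
    have "v \<in> X" using z it[of n] unfolding A_def g_def by blast
    moreover have "v \<in> Cj j" if "y \<in> Cj j" for j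
    proof -
      have "v \<in> (f^^n) ` Cj j" using z that unfolding A_def g_def by blast
      then show ?thesis using shift[of n j] per[of 1 j] by simp
    qed
    ultimately show "v \<in> A" unfolding A_def by blast
  qed
  have gc: "continuous_on X g" "g ` X \<subseteq> X" using it[of n] by (auto simp: g_def)
  define P where "P = (\<Inter>k. (g^^k) ` A)"
  note core_facts = core[OF X gc AK cA gA, folded P_def]
  have PA: "P \<subseteq> A" and gP: "g ` P = P" and cP: "compact P" using core_facts by auto
  have yP: "y \<in> P" unfolding P_def
  proof
    fix k
    obtain z where z: "z \<in> C" "(f^^(k*n)) z = y" "\<forall>j. z \<in> Cj j \<longleftrightarrow> y \<in> Cj j" using bk[of k] by blast
    have "z \<in> A" using z CX unfolding A_def by blast
    moreover have "(g^^k) = f^^(k*n)" by (simp add: g_def funpow_mult mult.commute)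
    ultimately show "y \<in> (g^^k) ` A" using z by (metis image_eqI)
  qed
  define q where "q = p^a"
  define r where "r = n div q"
  have nqr: "n = q * r" using dv by (simp add: q_def r_def)
  have r0: "0 < r" using nqr n1 by (simp add: gr0I)
  define G where "G i = (f^^(i*q)) ` P" for i
  define E where "E = (\<Union>i<r. G i)"
  have PX: "P \<subseteq> X" using PA AK by blast
  have yE: "y \<in> E" unfolding E_def G_def using yP r0 by force
  have EH: "E \<in> hyperspace X"
  proof -
    have "E \<subseteq> X" unfolding E_def G_def using it PX by blast
    moreover have "E \<noteq> {}" using yE by blast
    moreover have "closed E" unfolding E_def G_def
    proof (rule closed_UN)
      show "finite {..<r}" by simp
      show "\<forall>i\<in>{..<r}. closed ((f^^(i*q)) ` P)"
        using compact_imp_closed compact_continuous_image[OF continuous_on_subset[OF conjunct1[OF it] PX] cP] by blast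
    qed
    ultimately show ?thesis by (simp add: hyperspace_def)
  qed
  have Gr: "G r = G 0"
  proof -
    have "G r = (f^^n) ` P" unfolding G_def using nqr by (simp add: mult.commute)
    then show ?thesis using gP by (simp add: g_def G_def)
  qed
  have GS: "(f^^q) ` G i = G (Suc i)" for i
    by (simp add: G_def image_comp funpow_add[symmetric] algebra_simps del: funpow.simps)
  have FqE: "(f^^q) ` E = E"
  proof -
    have "(f^^q) ` E = (\<Union>i<r. G (Suc i))" unfolding E_def by (simp add: image_UN GS)
    also have "\<dots> = E"
    proof
      show "(\<Union>i<r. G (Suc i)) \<subseteq> E"
      proof
        fix x assume "x \<in> (\<Union>i<r. G (Suc i))"
        then obtain i where i: "i < r" "x \<in> G (Suc i)" by blast
        show "x \<in> E"
        proof (cases "Suc i < r")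
          case True then show ?thesis using i unfolding E_def by blast
        next
          case False then have "Suc i = r" using i by simp
          then show ?thesis using i Gr r0 unfolding E_def by auto
        qed
      qed
      show "E \<subseteq> (\<Union>i<r. G (Suc i))"
      proof
        fix x assume "x \<in> E"
        then obtain i where i: "i < r" "x \<in> G i" unfolding E_def by blast
        show "x \<in> (\<Union>i<r. G (Suc i))"
        proof (cases i)
          case 0
          then have "x \<in> G (Suc (r - 1))" using i Gr r0 by simp
          then show ?thesis using r0 by (metis UN_iff diff_less lessThan_iff zero_less_one)
        next
          case (Suc i')
          then show ?thesis using i by auto
        qed
      qed
    qed
    finally show ?thesis .
  qed
  have noper: "(f^^m) ` E \<noteq> E" if m: "0 < m" "m < q" for m
  proof
    assume eq: "(f^^m) ` E = E"
    then have "y \<in> (f^^m) ` E" using yE by simp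
    then obtain i z where iz: "i < r" "z \<in> P" "y = (f^^m) ((f^^(i*q)) z)"
      unfolding E_def G_def by blast
    define e where "e = m + i*q"
    have ye: "y = (f^^e) z" using iz by (simp add: e_def funpow_add)
    have ne: "\<not> q dvd e"
    proof
      assume "q dvd e"
      then have "q dvd m" unfolding e_def by (simp add: dvd_add_left_iff)
      then show False using m by (simp add: nat_dvd_not_less)
    qed
    have zA: "z \<in> A" using iz PA by blast
    have H: "y \<in> Cj j \<Longrightarrow> y \<in> Cj (e + j)" for j
    proof -
      assume "y \<in> Cj j"
      then have "z \<in> Cj j" using zA unfolding A_def by blast
      then have "y \<in> (f^^e) ` Cj j" using ye by blast
      then show ?thesis using shift by simp
    qed
    have Ht: "y \<in> Cj (t*e)" for t
    proof (induction t)
      case 0 then show ?case using y C0 by simp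
    next
      case (Suc t) then show ?case using H[of "t*e"] by (simp add: add.commute)
    qed
    have e0: "e \<noteq> 0" using ne by (metis dvd_0_right)
    obtain x' y' where bz: "e * x' = n * y' + gcd e n" using bezout_nat[OF e0] by blast
    have "gcd e n dvd d"
    proof -
      have "gcd e (p^a * r) dvd p^(a-1) * r" using gcd_part[OF p a] ne by (simp add: q_def)
      moreover have "d = p^(a-1) * r"
      proof -
        have "p^a = p * p^(a-1)" using a by (metis power_eq_if not_one_le_zero)
        then have "n = p * (p^(a-1) * r)" using nqr by (simp add: q_def)
        then show ?thesis using nd p2 by simp
      qed
      ultimately show ?thesis using nqr by (simp add: q_def)
    qed
    then obtain c where c: "d = gcd e n * c" by blast
    have "(x'*c) * e = (y'*c) * n + d" using bz c
      by (metis add_mult_distrib mult.assoc mult.commute)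
    then have "Cj ((x'*c)*e) = Cj d" using per by simp
    then show False using Ht[of "x'*c"] y by simp
  qed
  have "least_period (induced_map f) E q"
    unfolding least_period_def iter_induced using FqE noper
    by (auto simp: q_def p2 dest: noper) (use p2 in simp)
  then show ?thesis using EH unfolding Per_def q_def by blast
qed

theorem theorem5p1:
  fixes X :: "'a::metric_space set" and f :: "'a \<Rightarrow> 'a"
  assumes "compact X" and "X \<noteq> {}"
    and "continuous_on X f" and "f ` X \<subseteq> X"
  shows "Per X f \<union> {1} \<subseteq> Per (hyperspace X) (induced_map f) \<and>
         (\<forall>n p a. n \<in> Per (hyperspace X) (induced_map f) \<and> prime (p::nat) \<and> a \<ge> 1
           \<and> p ^ a dvd n \<longrightarrow> p ^ a \<in> Per (hyperspace X) (induced_map f))"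
proof (intro conjI allI impI)
  show "Per X f \<union> {1} \<subseteq> Per (hyperspace X) (induced_map f)"
  proof
    fix n assume "n \<in> Per X f \<union> {1}"
    then show "n \<in> Per (hyperspace X) (induced_map f)"
    proof
      assume "n \<in> Per X f"
      then obtain x where x: "x \<in> X" "least_period f x n" unfolding Per_def by blast
      have "{x} \<in> hyperspace X" using x by (simp add: hyperspace_def)
      moreover have "least_period (induced_map f) {x} n"
        using x(2) by (simp add: least_period_def iter_induced)
      ultimately show ?thesis unfolding Per_def by blast
    next
      assume "n \<in> {1}"
      then have n: "n = 1" by simp
      define P where "P = (\<Inter>k. (f^^k) ` X)"
      note cf = core[OF assms(1) assms(3) assms(4) subset_refl assms(1) assms(4), folded P_def]
      have "P \<in> hyperspace X" using cf assms(2) compact_imp_closed by (auto simp: hyperspace_def)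
      moreover have "least_period (induced_map f) P 1"
        using cf by (auto simp: least_period_def induced_map_def)
      ultimately show ?thesis unfolding Per_def n by blast
    qed
  qed
next
  fix n p a
  assume h: "n \<in> Per (hyperspace X) (induced_map f) \<and> prime (p::nat) \<and> a \<ge> 1 \<and> p ^ a dvd n"
  then obtain C where "C \<in> hyperspace X" "least_period (induced_map f) C n" unfolding Per_def by blast
  then show "p ^ a \<in> Per (hyperspace X) (induced_map f)"
    using part2[OF assms(1) assms(3) assms(4)] h by blast
qed

end
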